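(* For every $N\ge 2$ and every $x\in\{0,\dots,N-2\}$, $$|2p(x)-1|\le 3\,\frac{N-x-1}{(N-x)!}\le\frac{3}{(N-x-1)!}.$$ In particular, if $N\ge 4$, then $\frac14\le p(x)\le\frac34$ for all $x\in\{0,\dots,N-4\}$.
   Context: For $\sigma\in\mathcal{S}_N$, $\eta_1(\sigma)$ is the number of fixed points and $\eta_2(\sigma)$ the number of 2-cycles of $\sigma$; $\nu$ is the uniform measure on $\mathcal{S}_N$, and for $x\in\{0,\dots,N\}\setminus\{N-1\}$, $p(x)=\mathbb{E}_\nu[\eta_2\mid\eta_1=x]$. *)

theory Defs
  imports "HOL-Combinatorics.Permutations" "HOL-Probability.Probability"
begin

definition SN :: "nat \<Rightarrow> (nat \<Rightarrow> nat) set" where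
  "SN N = {\<sigma>. \<sigma> permutes {..<N}}"

definition eta1 :: "nat \<Rightarrow> (nat \<Rightarrow> nat) \<Rightarrow> nat" where
  "eta1 N \<sigma> = card {i \<in> {..<N}. \<sigma> i = i}"

definition eta2 :: "nat \<Rightarrow> (nat \<Rightarrow> nat) \<Rightarrow> nat" where
  "eta2 N \<sigma> = card {{i, \<sigma> i} | i. i \<in> {..<N} \<and> \<sigma> i \<noteq> i \<and> \<sigma> (\<sigma> i) = i}"

text \<open>p(x) = E_nu[eta2 | eta1 = x], nu uniform on S_N. Conditioning the uniform
  measure on the event {eta1 = x} gives the uniform measure on that event.\<close>
definition p :: "nat \<Rightarrow> nat \<Rightarrow> real" where
  "p N x = measure_pmf.expectation (pmf_of_set {\<sigma> \<in> SN N. eta1 N \<sigma> = x})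
             (\<lambda>\<sigma>. real (eta2 N \<sigma>))"

end

theory Submission imports Defs begin


definition Dr :: "nat \<Rightarrow> real" where
  "Dr n = fact n * (\<Sum>j\<le>n. (-1)^j / fact j)"

lemma Dr_Suc: "Dr (Suc n) = (Suc n) * Dr n + (-1)^(Suc n)"
proof -
  have "Dr (Suc n) = fact (Suc n) * (\<Sum>j\<le>n. (-1)^j / fact j) + fact (Suc n) * ((-1)^(Suc n) / fact (Suc n))"
    unfolding Dr_def by (simp only: sum.atMost_Suc distrib_left)
  also have "fact (Suc n) * ((-1)^(Suc n) / fact (Suc n)) = ((-1)^(Suc n) :: real)" by simp
  also have "fact (Suc n) * (\<Sum>j\<le>n. (-1)^j / fact j) = (Suc n) * Dr n"
    unfolding Dr_def by (simp add: fact_Suc)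
  finally show ?thesis .
qed

lemma Dr_rec2: "Dr (Suc (Suc n)) = (Suc n) * (Dr (Suc n) + Dr n)"
proof -
  have a: "Dr (Suc (Suc n)) = (Suc (Suc n)) * Dr (Suc n) + (-1)^n" using Dr_Suc[of "Suc n"] by simp
  have b: "Dr (Suc n) = (Suc n) * Dr n - (-1)^n" using Dr_Suc[of n] by simp
  show ?thesis unfolding a using b by (simp add: algebra_simps)
qed

lemma Dr_rec2': "real (Suc (Suc n)) * real (Suc n) * Dr n - Dr (Suc (Suc n)) = real (Suc n) * (-1)^n"
proof -
  have a: "Dr (Suc (Suc n)) = (Suc (Suc n)) * Dr (Suc n) + (-1)^n" using Dr_Suc[of "Suc n"] by simp
  have b: "Dr (Suc n) = (Suc n) * Dr n - (-1)^n" using Dr_Suc[of n] by simp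
  show ?thesis unfolding a b by (simp add: algebra_simps)
qed

lemma Dr_lower: "fact (Suc (Suc n)) / 3 \<le> Dr (Suc (Suc n)) \<and> fact (Suc (Suc (Suc n))) / 3 \<le> Dr (Suc (Suc (Suc n)))"
proof (induction n)
  case 0
  then show ?case by (simp add: Dr_def numeral_eq_Suc fact_numeral)
next
  case (Suc n)
  have "Dr (Suc (Suc (Suc (Suc n)))) = (Suc (Suc (Suc n))) * (Dr (Suc (Suc (Suc n))) + Dr (Suc (Suc n)))"
    by (rule Dr_rec2)
  also have "\<dots> \<ge> (Suc (Suc (Suc n))) * (fact (Suc (Suc (Suc n))) / 3 + fact (Suc (Suc n)) / 3)"
    using Suc.IH by (intro mult_left_mono) auto
  also have "(Suc (Suc (Suc n))) * (fact (Suc (Suc (Suc n))) / 3 + fact (Suc (Suc n)) / 3) = fact (Suc (Suc (Suc (Suc n)))) / (3::real)"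
    by (simp only: fact_Suc) (simp add: field_simps)
  finally have "Dr (Suc (Suc (Suc (Suc n)))) \<ge> fact (Suc (Suc (Suc (Suc n)))) / 3" .
  with Suc.IH show ?case by simp
qed

lemma Dr_ge: "2 \<le> m \<Longrightarrow> fact m / 3 \<le> Dr m"
  using Dr_lower[of "m-2"] by (cases m; cases "m - 1") auto

lemma Dr_binom: "(\<Sum>k\<le>n. real (n choose k) * Dr k) = fact n"
proof -
  define f :: "nat \<Rightarrow> nat \<Rightarrow> real" where "f j i = (-1)^j / (fact j * fact i)" for j i
  have "(\<Sum>k\<le>n. real (n choose k) * Dr k) = fact n * (\<Sum>k\<le>n. \<Sum>j\<le>k. f j (n - k))"
    unfolding Dr_def f_def sum_distrib_left
    by (intro sum.cong refl) (simp add: binomial_fact field_simps)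
  also have "(\<Sum>k\<le>n. \<Sum>j\<le>k. f j (n - k)) = (\<Sum>(j,i)\<in>{(j,i). j+i \<le> n}. f j i)"
  proof -
    have "(\<Sum>k\<le>n. \<Sum>j\<le>k. f j (n - k)) = (\<Sum>(k,j)\<in>Sigma {..n} (\<lambda>k. {..k}). f j (n - k))"
      by (simp add: sum.Sigma)
    also have "\<dots> = (\<Sum>(j,i)\<in>{(j,i). j+i \<le> n}. f j i)"
      by (rule sum.reindex_bij_witness[where i="\<lambda>(j, i). (n - i, j)" and j="\<lambda>(k, j). (j, n - k)"]) auto
    finally show ?thesis .
  qed
  also have "\<dots> = (\<Sum>s\<le>n. \<Sum>j\<le>s. f j (s - j))"
    by (rule sum.triangle_reindex_eq)
  also have "\<dots> = (\<Sum>s\<le>n. if s = 0 then 1 else 0)"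
  proof (intro sum.cong refl)
    fix s assume "s \<in> {..n}"
    have "(\<Sum>j\<le>s. f j (s - j)) = (\<Sum>j\<le>s. (-1)^j * real (s choose j)) / fact s"
      unfolding f_def sum_divide_distrib by (intro sum.cong refl) (simp add: binomial_fact)
    then show "(\<Sum>j\<le>s. f j (s - j)) = (if s = 0 then 1 else 0)"
      using choose_alternating_sum[of s, where 'a=real] by (auto simp: f_def)
  qed
  also have "\<dots> = 1" by simp
  finally show ?thesis by simp
qed



definition der :: "nat set \<Rightarrow> nat" where
  "der V = card {\<sigma>. \<sigma> permutes V \<and> (\<forall>i\<in>V. \<sigma> i \<noteq> i)}"

definition fixs :: "nat set \<Rightarrow> (nat \<Rightarrow> nat) \<Rightarrow> nat set" where
  "fixs V \<sigma> = {i\<in>V. \<sigma> i = i}"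

lemma permutes_shrink:
  assumes "\<sigma> permutes V" "\<And>x. x \<notin> W \<Longrightarrow> \<sigma> x = x"
  shows "\<sigma> permutes W"
  using assms unfolding permutes_def by blast

lemma L1:
  assumes "F \<subseteq> V"
  shows "{\<sigma>. \<sigma> permutes V \<and> fixs V \<sigma> = F} = {\<sigma>. \<sigma> permutes (V - F) \<and> (\<forall>i\<in>V - F. \<sigma> i \<noteq> i)}"
proof (intro set_eqI iffI)
  fix \<sigma> assume "\<sigma> \<in> {\<sigma>. \<sigma> permutes V \<and> fixs V \<sigma> = F}"
  then have p: "\<sigma> permutes V" and F: "fixs V \<sigma> = F" by auto
  have "\<sigma> permutes (V - F)"
    by (rule permutes_shrink[OF p]) (use p F in \<open>auto simp: fixs_def permutes_not_in\<close>)
  moreover have "\<forall>i\<in>V - F. \<sigma> i \<noteq> i" using F by (auto simp: fixs_def)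
  ultimately show "\<sigma> \<in> {\<sigma>. \<sigma> permutes (V - F) \<and> (\<forall>i\<in>V - F. \<sigma> i \<noteq> i)}" by simp
next
  fix \<sigma> assume "\<sigma> \<in> {\<sigma>. \<sigma> permutes (V - F) \<and> (\<forall>i\<in>V - F. \<sigma> i \<noteq> i)}"
  then have p: "\<sigma> permutes (V - F)" and d: "\<forall>i\<in>V - F. \<sigma> i \<noteq> i" by auto
  have "\<sigma> permutes V" using p by (rule permutes_subset) auto
  moreover have "fixs V \<sigma> = F" using p d assms by (auto simp: fixs_def permutes_not_in)
  ultimately show "\<sigma> \<in> {\<sigma>. \<sigma> permutes V \<and> fixs V \<sigma> = F}" by simp
qed

lemma card_group:
  fixes A :: "'a set" and T :: "'b set"
  assumes "finite A" "finite T" "g ` A \<subseteq> T"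
  shows "real (card A) = (\<Sum>t\<in>T. real (card {a\<in>A. g a = t}))"
  using sum.group[OF assms, of "\<lambda>_. 1::real"] by simp

lemma finite_perms: "finite V \<Longrightarrow> finite {\<sigma>. \<sigma> permutes V \<and> P \<sigma>}"
  by (rule finite_subset[OF _ finite_permutations]) auto

lemma L2:
  assumes "finite V"
  shows "fact (card V) = (\<Sum>G\<in>Pow V. real (der G))"
proof -
  have "fact (card V) = real (card {\<sigma>. \<sigma> permutes V})"
    using card_permutations[OF refl assms] by simp
  also have "\<dots> = (\<Sum>F\<in>Pow V. real (card {\<sigma>\<in>{\<sigma>. \<sigma> permutes V}. fixs V \<sigma> = F}))"
    by (rule card_group) (use assms finite_permutations in \<open>auto simp: fixs_def\<close>)
  also have "\<dots> = (\<Sum>F\<in>Pow V. real (der (V - F)))"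
    by (intro sum.cong refl) (simp add: der_def L1[symmetric])
  also have "\<dots> = (\<Sum>G\<in>Pow V. real (der G))"
    by (rule sum.reindex_bij_witness[where i="\<lambda>F. V - F" and j="\<lambda>F. V - F"]) auto
  finally show ?thesis .
qed

lemma Pow_card_sum:
  assumes "finite V"
  shows "(\<Sum>G\<in>Pow V. h (card G)) = (\<Sum>k\<le>card V. real (card V choose k) * (h k :: real))"
proof -
  have "(\<Sum>G\<in>Pow V. h (card G)) = (\<Sum>k\<le>card V. \<Sum>G\<in>{G\<in>Pow V. card G = k}. h (card G))"
    by (rule sum.group[symmetric]) (use assms in \<open>auto intro: card_mono\<close>)
  also have "\<dots> = (\<Sum>k\<le>card V. real (card V choose k) * h k)"
  proof (intro sum.cong refl)
    fix k
    have "{G\<in>Pow V. card G = k} = {B. B \<subseteq> V \<and> card B = k}" by auto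
    then show "(\<Sum>G\<in>{G\<in>Pow V. card G = k}. h (card G)) = real (card V choose k) * h k"
      using n_subsets[OF assms, of k] by simp
  qed
  finally show ?thesis .
qed

lemma der_Dr: "finite V \<Longrightarrow> real (der V) = Dr (card V)"
proof (induction "card V" arbitrary: V rule: less_induct)
  case less
  have fin: "finite (Pow V - {V})" using less.prems by simp
  have IH: "\<And>G. G \<in> Pow V - {V} \<Longrightarrow> real (der G) = Dr (card G)"
  proof -
    fix G assume G: "G \<in> Pow V - {V}"
    then have "G \<subset> V" by auto
    then have "card G < card V" "finite G" using less.prems by (auto intro: psubset_card_mono finite_subset)
    then show "real (der G) = Dr (card G)" using less.hyps by blast
  qed
  have "fact (card V) = real (der V) + (\<Sum>G\<in>Pow V - {V}. real (der G))"
    using L2[OF less.prems] sum.remove[of "Pow V" V "\<lambda>G. real (der G)"] less.prems by simp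
  also have "(\<Sum>G\<in>Pow V - {V}. real (der G)) = (\<Sum>G\<in>Pow V - {V}. Dr (card G))"
    using IH by simp
  finally have 1: "fact (card V) = real (der V) + (\<Sum>G\<in>Pow V - {V}. Dr (card G))" .
  have "fact (card V) = (\<Sum>G\<in>Pow V. Dr (card G))"
    using Pow_card_sum[OF less.prems, of Dr] Dr_binom by simp
  also have "\<dots> = Dr (card V) + (\<Sum>G\<in>Pow V - {V}. Dr (card G))"
    using sum.remove[of "Pow V" V "\<lambda>G. Dr (card G)"] less.prems by simp
  finally show ?case using 1 by simp
qed



lemma count1:
  assumes "finite V" "x \<le> card V"
  shows "real (card {\<sigma>. \<sigma> permutes V \<and> card (fixs V \<sigma>) = x}) = real (card V choose x) * Dr (card V - x)"
proof -
  let ?A = "{\<sigma>. \<sigma> permutes V \<and> card (fixs V \<sigma>) = x}"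
  let ?T = "{F. F \<subseteq> V \<and> card F = x}"
  have "real (card ?A) = (\<Sum>F\<in>?T. real (card {\<sigma>\<in>?A. fixs V \<sigma> = F}))"
    by (rule card_group) (use assms finite_perms in \<open>auto simp: fixs_def\<close>)
  also have "\<dots> = (\<Sum>F\<in>?T. Dr (card V - x))"
  proof (intro sum.cong refl)
    fix F assume F: "F \<in> ?T"
    have "{\<sigma>\<in>?A. fixs V \<sigma> = F} = {\<sigma>. \<sigma> permutes V \<and> fixs V \<sigma> = F}" using F by auto
    also have "\<dots> = {\<sigma>. \<sigma> permutes (V - F) \<and> (\<forall>i\<in>V - F. \<sigma> i \<noteq> i)}" using F by (intro L1) auto
    finally have "real (card {\<sigma>\<in>?A. fixs V \<sigma> = F}) = real (der (V - F))" by (simp add: der_def)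
    also have "\<dots> = Dr (card (V - F))" using assms by (intro der_Dr) auto
    also have "card (V - F) = card V - x" using F assms by (auto simp: card_Diff_subset finite_subset)
    finally show "real (card {\<sigma>\<in>?A. fixs V \<sigma> = F}) = Dr (card V - x)" .
  qed
  also have "\<dots> = real (card V choose x) * Dr (card V - x)"
    using n_subsets[OF assms(1), of x] by simp
  finally show ?thesis .
qed

lemma L1b:
  assumes "F \<subseteq> V - {a, b}" "a \<in> V" "b \<in> V" "a \<noteq> b"
  shows "{\<sigma>. \<sigma> permutes V \<and> \<sigma> a = b \<and> \<sigma> b = a \<and> fixs V \<sigma> = F}
       = (\<lambda>\<tau>. Transposition.transpose a b \<circ> \<tau>) ` {\<tau>. \<tau> permutes (V - {a,b} - F) \<and> (\<forall>i\<in>V - {a,b} - F. \<tau> i \<noteq> i)}"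
proof (intro set_eqI iffI)
  fix \<sigma> assume "\<sigma> \<in> {\<sigma>. \<sigma> permutes V \<and> \<sigma> a = b \<and> \<sigma> b = a \<and> fixs V \<sigma> = F}"
  then have p: "\<sigma> permutes V" and ab: "\<sigma> a = b" "\<sigma> b = a" and F: "fixs V \<sigma> = F" by auto
  define \<tau> where "\<tau> = Transposition.transpose a b \<circ> \<sigma>"
  have s: "\<sigma> = Transposition.transpose a b \<circ> \<tau>" by (simp add: \<tau>_def fun_eq_iff)
  have pt: "\<tau> permutes V" unfolding \<tau>_def
    by (rule permutes_compose[OF p permutes_swap_id]) (use assms in auto)
  have "\<tau> permutes (V - {a,b} - F)"
  proof (rule permutes_shrink[OF pt])
    fix y assume y: "y \<notin> V - {a,b} - F"
    show "\<tau> y = y"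
    proof (cases "y \<in> V")
      case False then have "y \<noteq> a" "y \<noteq> b" using assms by auto
      with False show ?thesis using p by (simp add: \<tau>_def permutes_not_in Transposition.transpose_def)
    next
      case True
      then have "y = a \<or> y = b \<or> y \<in> F" using y by auto
      then show ?thesis using ab F assms by (auto simp: \<tau>_def fixs_def Transposition.transpose_def)
    qed
  qed
  moreover have "\<forall>i\<in>V - {a,b} - F. \<tau> i \<noteq> i"
    using F by (auto simp: \<tau>_def fixs_def Transposition.transpose_def split: if_splits)
  ultimately show "\<sigma> \<in> (\<lambda>\<tau>. Transposition.transpose a b \<circ> \<tau>) ` {\<tau>. \<tau> permutes (V - {a,b} - F) \<and> (\<forall>i\<in>V - {a,b} - F. \<tau> i \<noteq> i)}"
    using s by blast
next
  fix \<sigma> assume "\<sigma> \<in> (\<lambda>\<tau>. Transposition.transpose a b \<circ> \<tau>) ` {\<tau>. \<tau> permutes (V - {a,b} - F) \<and> (\<forall>i\<in>V - {a,b} - F. \<tau> i \<noteq> i)}"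
  then obtain \<tau> where s: "\<sigma> = Transposition.transpose a b \<circ> \<tau>" and pt: "\<tau> permutes (V - {a,b} - F)"
    and d: "\<forall>i\<in>V - {a,b} - F. \<tau> i \<noteq> i" by auto
  have pt': "\<tau> permutes V" using pt by (rule permutes_subset) auto
  have "\<sigma> permutes V" unfolding s
    by (rule permutes_compose[OF pt' permutes_swap_id]) (use assms in auto)
  moreover have "\<tau> a = a" "\<tau> b = b" using pt by (auto simp: permutes_not_in)
  moreover have "fixs V \<sigma> = F"
  proof (intro set_eqI iffI)
    fix i assume "i \<in> fixs V \<sigma>"
    then have i: "i \<in> V" "Transposition.transpose a b (\<tau> i) = i" by (auto simp: fixs_def s)
    show "i \<in> F"
    proof (rule ccontr)
      assume nF: "i \<notin> F"
      show False
      proof (cases "i = a \<or> i = b")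
        case True then show ?thesis using i \<open>\<tau> a = a\<close> \<open>\<tau> b = b\<close> assms by (auto simp: Transposition.transpose_def)
      next
        case False
        then have iW: "i \<in> V - {a,b} - F" using i nF by auto
        then have "\<tau> i \<in> V - {a,b} - F" by (simp only: permutes_in_image[OF pt])
        then have "Transposition.transpose a b (\<tau> i) = \<tau> i" by (auto simp: Transposition.transpose_def)
        then show False using i d iW by metis
      qed
    qed
  next
    fix i assume "i \<in> F"
    then have "i \<in> V" "i \<noteq> a" "i \<noteq> b" "\<tau> i = i" using assms pt by (auto simp: permutes_not_in)
    then show "i \<in> fixs V \<sigma>" by (auto simp: fixs_def s Transposition.transpose_def)
  qed
  ultimately show "\<sigma> \<in> {\<sigma>. \<sigma> permutes V \<and> \<sigma> a = b \<and> \<sigma> b = a \<and> fixs V \<sigma> = F}"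
    using assms by (auto simp: s Transposition.transpose_def)
qed

lemma count2:
  assumes "finite V" "a \<in> V" "b \<in> V" "a \<noteq> b" "x \<le> card V - 2"
  shows "real (card {\<sigma>. \<sigma> permutes V \<and> \<sigma> a = b \<and> \<sigma> b = a \<and> card (fixs V \<sigma>) = x})
       = real ((card V - 2) choose x) * Dr (card V - 2 - x)"
proof -
  let ?A = "{\<sigma>. \<sigma> permutes V \<and> \<sigma> a = b \<and> \<sigma> b = a \<and> card (fixs V \<sigma>) = x}"
  let ?T = "{F. F \<subseteq> V - {a,b} \<and> card F = x}"
  have cW: "card (V - {a,b}) = card V - 2" using assms by (simp add: card_Diff_subset)
  have "real (card ?A) = (\<Sum>F\<in>?T. real (card {\<sigma>\<in>?A. fixs V \<sigma> = F}))"
    by (rule card_group) (use assms finite_perms in \<open>auto simp: fixs_def\<close>)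
  also have "\<dots> = (\<Sum>F\<in>?T. Dr (card V - 2 - x))"
  proof (intro sum.cong refl)
    fix F assume F: "F \<in> ?T"
    let ?W = "V - {a,b} - F"
    have "{\<sigma>\<in>?A. fixs V \<sigma> = F} = {\<sigma>. \<sigma> permutes V \<and> \<sigma> a = b \<and> \<sigma> b = a \<and> fixs V \<sigma> = F}" using F by auto
    also have "\<dots> = (\<lambda>\<tau>. Transposition.transpose a b \<circ> \<tau>) ` {\<tau>. \<tau> permutes ?W \<and> (\<forall>i\<in>?W. \<tau> i \<noteq> i)}"
      using F assms by (intro L1b) auto
    finally have eq: "{\<sigma>\<in>?A. fixs V \<sigma> = F} = (\<lambda>\<tau>. Transposition.transpose a b \<circ> \<tau>) ` {\<tau>. \<tau> permutes ?W \<and> (\<forall>i\<in>?W. \<tau> i \<noteq> i)}" .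
    have inj: "inj_on (\<lambda>\<tau>. Transposition.transpose a b \<circ> \<tau>) X" for X
    proof (rule inj_onI)
      fix u v assume "Transposition.transpose a b \<circ> u = Transposition.transpose a b \<circ> v"
      then have "Transposition.transpose a b \<circ> (Transposition.transpose a b \<circ> u) = Transposition.transpose a b \<circ> (Transposition.transpose a b \<circ> v)" by simp
      then show "u = v" by (simp add: comp_assoc[symmetric])
    qed
    have "card {\<sigma>\<in>?A. fixs V \<sigma> = F} = card {\<tau>. \<tau> permutes ?W \<and> (\<forall>i\<in>?W. \<tau> i \<noteq> i)}"
      unfolding eq by (rule card_image) (rule inj)
    then have "real (card {\<sigma>\<in>?A. fixs V \<sigma> = F}) = real (der ?W)" by (simp add: der_def)
    also have "\<dots> = Dr (card ?W)" using assms by (intro der_Dr) auto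
    also have "card ?W = card V - 2 - x" using F assms cW by (auto simp: card_Diff_subset finite_subset)
    finally show "real (card {\<sigma>\<in>?A. fixs V \<sigma> = F}) = Dr (card V - 2 - x)" .
  qed
  also have "\<dots> = real ((card V - 2) choose x) * Dr (card V - 2 - x)"
    using n_subsets[of "V - {a,b}" x] assms cW by simp
  finally show ?thesis .
qed



lemma binom_id:
  fixes N x n :: nat
  assumes "N = x + Suc (Suc n)"
  shows "2 * real (N choose 2) * real ((N - 2) choose x) = real (N choose x) * real (Suc (Suc n)) * real (Suc n)"
proof -
  have e1: "N - 2 = x + n" "N - 2 - x = n" "N - x = Suc (Suc n)" using assms by auto
  have "2 * real (N choose 2) * real ((N - 2) choose x) = 2 * (fact N / (fact 2 * fact (N - 2))) * (fact (x+n) / (fact x * fact n))"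
  proof -
    have "real (N choose 2) = fact N / (fact 2 * fact (N - 2))" using assms by (simp add: binomial_fact)
    moreover have "real ((N - 2) choose x) = fact (x+n) / (fact x * fact n)"
      using binomial_fact[of x "N - 2", where 'a=real] by (simp add: e1)
    ultimately show ?thesis by simp
  qed
  also have "\<dots> = fact N / (fact x * fact n)"
    by (simp add: e1 field_simps)
  also have "\<dots> = real (N choose x) * real (Suc (Suc n)) * real (Suc n)"
  proof -
    have f: "fact (N - x) = real (Suc (Suc n)) * real (Suc n) * fact n"
      unfolding e1 by (simp add: fact_Suc)
    have "real (N choose x) = fact N / (fact x * fact (N - x))"
      using assms by (simp add: binomial_fact)
    define k where "k = real (Suc (Suc n)) * real (Suc n)"
    have kp: "k > 0" unfolding k_def by simp
    have C: "real (N choose x) = fact N / (fact x * (k * fact n))" using \<open>real (N choose x) = _\<close> f by (simp add: k_def)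
    have "real (N choose x) * real (Suc (Suc n)) * real (Suc n) = real (N choose x) * k" by (simp add: k_def)
    also have "\<dots> = fact N / (fact x * (k * fact n)) * k" using C by simp
    also have "\<dots> = fact N / (fact x * fact n)" using kp by (simp add: field_simps)
    finally show ?thesis by simp
  qed
  finally show ?thesis .
qed

lemma eta2_sum:
  assumes S: "S = {\<sigma>. \<sigma> permutes {..<N} \<and> card (fixs {..<N} \<sigma>) = x}" and x: "x \<le> N - 2" and N: "2 \<le> N"
  shows "(\<Sum>\<sigma>\<in>S. real (eta2 N \<sigma>)) = real (N choose 2) * real ((N - 2) choose x) * Dr (N - 2 - x)"
proof -
  define V where "V = {..<N}"
  define P2 where "P2 = {T. T \<subseteq> V \<and> card T = 2}"
  define Cy where "Cy \<sigma> = {{i, \<sigma> i} | i. i \<in> {..<N} \<and> \<sigma> i \<noteq> i \<and> \<sigma> (\<sigma> i) = i}" for \<sigma> :: "nat \<Rightarrow> nat"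
  have finS: "finite S" unfolding S by (rule finite_perms) simp
  have finP2: "finite P2" unfolding P2_def V_def by (rule finite_subset[of _ "Pow {..<N}"]) auto
  have CyP2: "Cy \<sigma> \<subseteq> P2" if "\<sigma> \<in> S" for \<sigma>
  proof
    fix T assume "T \<in> Cy \<sigma>"
    then obtain i where i: "T = {i, \<sigma> i}" "i < N" "\<sigma> i \<noteq> i" by (auto simp: Cy_def)
    have "\<sigma> permutes {..<N}" using that by (simp add: S)
    then have "\<sigma> i \<in> V" using permutes_in_image[of \<sigma> "{..<N}" i] i by (simp add: V_def)
    then show "T \<in> P2" using i by (auto simp: P2_def V_def)
  qed
  have "(\<Sum>\<sigma>\<in>S. real (eta2 N \<sigma>)) = (\<Sum>\<sigma>\<in>S. \<Sum>T\<in>P2. if T \<in> Cy \<sigma> then 1 else 0)"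
  proof (intro sum.cong refl)
    fix \<sigma> assume s: "\<sigma> \<in> S"
    have "(\<Sum>T\<in>P2. if T \<in> Cy \<sigma> then 1 else (0::real)) = (\<Sum>T\<in>{T\<in>P2. T \<in> Cy \<sigma>}. 1)"
      by (rule sum.inter_filter[symmetric, OF finP2])
    also have "{T\<in>P2. T \<in> Cy \<sigma>} = Cy \<sigma>" using CyP2[OF s] by auto
    finally show "real (eta2 N \<sigma>) = (\<Sum>T\<in>P2. if T \<in> Cy \<sigma> then 1 else 0)"
      by (simp add: eta2_def Cy_def)
  qed
  also have "\<dots> = (\<Sum>T\<in>P2. \<Sum>\<sigma>\<in>S. if T \<in> Cy \<sigma> then 1 else 0)" by (rule sum.swap)
  also have "\<dots> = (\<Sum>T\<in>P2. real ((N - 2) choose x) * Dr (N - 2 - x))"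
  proof (intro sum.cong refl)
    fix T assume "T \<in> P2"
    then obtain a b where T: "T = {a, b}" "a \<noteq> b" "a < N" "b < N" by (auto simp: P2_def V_def card_2_iff)
    have "(\<Sum>\<sigma>\<in>S. if T \<in> Cy \<sigma> then 1 else (0::real)) = (\<Sum>\<sigma>\<in>{\<sigma>\<in>S. T \<in> Cy \<sigma>}. 1)"
      by (rule sum.inter_filter[symmetric, OF finS])
    also have "{\<sigma>\<in>S. T \<in> Cy \<sigma>} = {\<sigma>. \<sigma> permutes {..<N} \<and> \<sigma> a = b \<and> \<sigma> b = a \<and> card (fixs {..<N} \<sigma>) = x}"
    proof -
      have cy: "T \<in> Cy \<sigma> \<longleftrightarrow> \<sigma> a = b \<and> \<sigma> b = a" for \<sigma>
      proof
        assume "T \<in> Cy \<sigma>"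
        then have "\<exists>i. T = {i, \<sigma> i} \<and> \<sigma> (\<sigma> i) = i" unfolding Cy_def by blast
        then obtain i where i: "{a,b} = {i, \<sigma> i}" "\<sigma> (\<sigma> i) = i" using T(1) by blast
        from i(1) have "(a = i \<and> b = \<sigma> i) \<or> (a = \<sigma> i \<and> b = i)" by (simp add: doubleton_eq_iff)
        then show "\<sigma> a = b \<and> \<sigma> b = a"
        proof (elim disjE conjE)
          assume "a = i" "b = \<sigma> i" then show ?thesis using i(2) by simp
        next
          assume "a = \<sigma> i" "b = i" then show ?thesis using i(2) by simp
        qed
      next
        assume "\<sigma> a = b \<and> \<sigma> b = a"
        then have "T = {a, \<sigma> a} \<and> a \<in> {..<N} \<and> \<sigma> a \<noteq> a \<and> \<sigma> (\<sigma> a) = a" using T by auto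
        then show "T \<in> Cy \<sigma>" unfolding Cy_def by blast
      qed
      show ?thesis unfolding S using cy by blast
    qed
    also have "(\<Sum>\<sigma>\<in>{\<sigma>. \<sigma> permutes {..<N} \<and> \<sigma> a = b \<and> \<sigma> b = a \<and> card (fixs {..<N} \<sigma>) = x}. 1::real)
        = real ((card {..<N} - 2) choose x) * Dr (card {..<N} - 2 - x)"
      using count2[of "{..<N}" a b x] T x by simp
    finally show "(\<Sum>\<sigma>\<in>S. if T \<in> Cy \<sigma> then 1 else 0) = real ((N - 2) choose x) * Dr (N - 2 - x)"
      by simp
  qed
  also have "\<dots> = real (N choose 2) * real ((N - 2) choose x) * Dr (N - 2 - x)"
    using n_subsets[of V 2] by (simp add: P2_def V_def)
  finally show ?thesis .
qed



theorem lemmaB1: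
  fixes N x :: nat
  assumes "2 \<le> N" and "x \<le> N - 2"
  shows "\<bar>2 * p N x - 1\<bar> \<le> 3 * real (N - x - 1) / fact (N - x)
       \<and> 3 * real (N - x - 1) / fact (N - x) \<le> 3 / fact (N - x - 1)
       \<and> (4 \<le> N \<and> x \<le> N - 4 \<longrightarrow> 1/4 \<le> p N x \<and> p N x \<le> 3/4)"
proof -
  define n where "n = N - x - 2"
  have Nn: "N = x + Suc (Suc n)" using assms unfolding n_def by arith
  have e: "N - x = Suc (Suc n)" "N - 2 - x = n" "N - x - 1 = Suc n" using Nn by auto
  define S where "S = {\<sigma>. \<sigma> permutes {..<N} \<and> card (fixs {..<N} \<sigma>) = x}"
  have S0: "{\<sigma> \<in> SN N. eta1 N \<sigma> = x} = S" by (auto simp: S_def SN_def eta1_def fixs_def)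
  define c where "c = real (N choose x)"
  define d where "d = Dr (Suc (Suc n))"
  have cp: "c > 0" unfolding c_def using Nn by simp
  have dge: "fact (Suc (Suc n)) / 3 \<le> d" unfolding d_def by (rule Dr_ge) simp
  have dp: "d > 0" by (rule less_le_trans[OF _ dge]) simp
  have cardS: "real (card S) = c * d"
    unfolding S_def c_def d_def using count1[of "{..<N}" x] Nn e by simp
  have finS: "finite S" unfolding S_def by (rule finite_perms) simp
  have neS: "S \<noteq> {}" using cardS cp dp by auto
  have sum: "(\<Sum>\<sigma>\<in>S. real (eta2 N \<sigma>)) = real (N choose 2) * real ((N - 2) choose x) * Dr n"
    using eta2_sum[OF S_def assms(2,1)] e by simp
  have bi: "2 * real (N choose 2) * real ((N - 2) choose x) = c * real (Suc (Suc n)) * real (Suc n)"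
    unfolding c_def by (rule binom_id[OF Nn])
  have pe: "p N x = real (N choose 2) * real ((N - 2) choose x) * Dr n / (c * d)"
    unfolding p_def S0 using integral_pmf_of_set[OF neS finS, of "\<lambda>\<sigma>. real (eta2 N \<sigma>)"] sum cardS by simp
  have "2 * p N x - 1 = (c * real (Suc (Suc n)) * real (Suc n) * Dr n - c * d) / (c * d)"
    unfolding pe bi[symmetric] using cp dp by (simp add: field_simps)
  also have "\<dots> = (real (Suc (Suc n)) * real (Suc n) * Dr n - d) / d"
    using cp dp by (simp add: field_simps)
  also have "\<dots> = real (Suc n) * (-1)^n / d" unfolding d_def using Dr_rec2'[of n] by simp
  finally have two: "2 * p N x - 1 = real (Suc n) * (-1)^n / d" .
  then have abs1: "\<bar>2 * p N x - 1\<bar> = real (Suc n) / d" using dp by (simp add: abs_mult power_abs)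
  have "real (Suc n) / d \<le> real (Suc n) / (fact (Suc (Suc n)) / 3)"
    by (rule divide_left_mono[OF dge]) (use dp in auto)
  also have "\<dots> = 3 * real (N - x - 1) / fact (N - x)" unfolding e by simp
  finally have P1: "\<bar>2 * p N x - 1\<bar> \<le> 3 * real (N - x - 1) / fact (N - x)" using abs1 by simp
  have P2: "3 * real (N - x - 1) / fact (N - x) \<le> 3 / fact (N - x - 1)"
  proof -
    have f: "fact (Suc (Suc n)) = real (Suc (Suc n)) * fact (Suc n)" by (simp only: fact_Suc of_nat_fact)
    obtain F :: real where F: "F = fact (Suc n)" by simp
    have Fp: "F > 0" using F by simp
    have "3 * real (Suc n) / (real (Suc (Suc n)) * F) = (3 / F) * (real (Suc n) / real (Suc (Suc n)))"
      by (simp add: field_simps)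
    also have "\<dots> \<le> (3 / F) * 1"
      by (rule mult_left_mono) (use Fp in auto)
    finally show ?thesis by (simp only: e diff_Suc_1 f F[symmetric] mult_1_right)
  qed
  have P3: "1/4 \<le> p N x \<and> p N x \<le> 3/4" if "4 \<le> N \<and> x \<le> N - 4"
  proof -
    have "2 \<le> n" using that Nn by auto
    then have "fact 3 \<le> (fact (Suc n) :: real)" by (intro fact_mono) auto
    then have "3 / fact (Suc n) \<le> (3 / fact 3 :: real)" by (intro divide_left_mono) auto
    also have "(3 / fact 3 :: real) = 1/2" by (simp add: fact_numeral)
    finally have h: "3 / fact (Suc n) \<le> (1/2::real)" .
    have "\<bar>2 * p N x - 1\<bar> \<le> 3 / fact (Suc n)" using order_trans[OF P1 P2] by (simp only: e(3))
    then have "\<bar>2 * p N x - 1\<bar> \<le> 1/2" using h by linarith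
    then show ?thesis by (simp only: abs_le_iff) linarith
  qed
  show ?thesis using P1 P2 P3 by blast
qed


end
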